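(* Let $T,S>0$. The concatenation map $\theta:\mathcal C_0([0,T],\mathfrak a)\otimes\mathcal C_0([0,S],\mathfrak a)\to\mathcal C_0([0,T+S],\mathfrak a)$, $\pi_1\otimes\pi_2\mapsto\pi_1\ast\pi_2$, is a crystal isomorphism. More precisely, for all $\pi_1,\pi_2$, $\alpha\in\Delta$ and $c\in\mathbb R$: (i) $\gamma(\pi_1\ast\pi_2)=\gamma(\pi_1\otimes\pi_2)$; (ii) $\varepsilon_\alpha(\pi_1\ast\pi_2)=\varepsilon_\alpha(\pi_1\otimes\pi_2)$ (equivalently $\varphi_\alpha(\pi_1\ast\pi_2)=\varphi_\alpha(\pi_1\otimes\pi_2)$); (iii) $e^c_\alpha\cdot(\pi_1\ast\pi_2)=\theta(e^c_\alpha\cdot(\pi_1\otimes\pi_2))$.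
   Context: $\mathfrak a$ is the real Cartan subalgebra of a complex semisimple Lie algebra, $\Delta$ its simple roots, $\alpha^\vee$ the coroot of $\alpha$. For $T>0$, $\mathcal C_0([0,T],\mathfrak a)$ (continuous paths with $\pi(0)=0$) carries the geometric crystal structure: $\gamma(\pi)=\pi(T)$, $\varepsilon_\alpha(\pi)=\log\int_0^Te^{-\alpha(\pi(s))}ds$, $\varphi_\alpha(\pi)=\alpha(\pi(T))+\varepsilon_\alpha(\pi)$, $(e^c_\alpha\cdot\pi)(t)=\pi(t)+\log\big(1+(e^c-1)e^{-\varepsilon_\alpha(\pi)}\int_0^te^{-\alpha(\pi(s))}ds\big)\alpha^\vee$. The tensor product $X\otimes Y$ of two such crystals is $X\times Y$ with $\gamma(x\otimes y)=\gamma(x)+\gamma(y)$, $\varepsilon_\alpha(x\otimes y)=\varepsilon_\alpha(x)+\log(1+e^{\varepsilon_\alpha(y)-\varphi_\alpha(x)})$, $\varphi_\alpha(x\otimes y)=\varphi_\alpha(y)+\log(1+e^{\varphi_\alpha(x)-\varepsilon_\alpha(y)})$, $e^c_\alpha(x\otimes y)=e^{c_1}_\alpha x\otimes e^{c_2}_\alpha y$ with $e^{c_1}=\frac{e^{c+\varphi_\alpha(x)}+e^{\varepsilon_\alpha(y)}}{e^{\varphi_\alpha(x)}+e^{\varepsilon_\alpha(y)}}$, $e^{c_2}=\frac{e^{\varphi_\alpha(x)}+e^{\varepsilon_\alpha(y)}}{e^{\varphi_\alpha(x)}+e^{-c+\varepsilon_\alpha(y)}}$. Concatenation: $(\pi_1\ast\pi_2)(t)=\pi_1(t)$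 for $0\le t\le T$ and $\pi_1(T)+\pi_2(t-T)$ for $T\le t\le T+S$. A crystal isomorphism is a bijection preserving $\gamma,\varepsilon_\alpha,\varphi_\alpha$ and commuting with all $e^c_\alpha$, whose inverse has the same properties. *)

theory Defs
  imports "HOL-Analysis.Analysis"
begin

text \<open>The Cartan subalgebra is modelled by a finite-dimensional real inner product
space 'a; a simple root alpha is a linear functional on 'a and its coroot
av is a vector with alpha av = 2.  Paths on [0,T] are functions real => 'a,
continuous on [0,T], vanishing at 0, and extensional (undefined outside [0,T]).\<close>

definition C0 :: "real \<Rightarrow> (real \<Rightarrow> 'a::euclidean_space) set" where
  "C0 T = {\<pi>. continuous_on {0..T} \<pi> \<and> \<pi> 0 = 0 \<and> \<pi> \<in> extensional {0..T}}"

definition cgamma :: "real \<Rightarrow> (real \<Rightarrow> 'a::euclidean_space) \<Rightarrow> 'a" where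
  "cgamma T \<pi> = \<pi> T"

definition ceps :: "('a::euclidean_space \<Rightarrow> real) \<Rightarrow> real \<Rightarrow> (real \<Rightarrow> 'a) \<Rightarrow> real" where
  "ceps \<alpha> T \<pi> = ln (integral {0..T} (\<lambda>s. exp (- \<alpha> (\<pi> s))))"

definition cphi :: "('a::euclidean_space \<Rightarrow> real) \<Rightarrow> real \<Rightarrow> (real \<Rightarrow> 'a) \<Rightarrow> real" where
  "cphi \<alpha> T \<pi> = \<alpha> (\<pi> T) + ceps \<alpha> T \<pi>"

definition cact :: "('a::euclidean_space \<Rightarrow> real) \<Rightarrow> 'a \<Rightarrow> real \<Rightarrow> real \<Rightarrow> (real \<Rightarrow> 'a) \<Rightarrow> (real \<Rightarrow> 'a)" where
  "cact \<alpha> av T c \<pi> = (\<lambda>t\<in>{0..T}. \<pi> t +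
      ln (1 + (exp c - 1) * exp (- ceps \<alpha> T \<pi>) * integral {0..t} (\<lambda>s. exp (- \<alpha> (\<pi> s)))) *\<^sub>R av)"

definition tgamma :: "real \<Rightarrow> real \<Rightarrow> (real \<Rightarrow> 'a::euclidean_space) \<Rightarrow> (real \<Rightarrow> 'a) \<Rightarrow> 'a" where
  "tgamma T S x y = cgamma T x + cgamma S y"

definition teps :: "('a::euclidean_space \<Rightarrow> real) \<Rightarrow> real \<Rightarrow> real \<Rightarrow> (real \<Rightarrow> 'a) \<Rightarrow> (real \<Rightarrow> 'a) \<Rightarrow> real" where
  "teps \<alpha> T S x y = ceps \<alpha> T x + ln (1 + exp (ceps \<alpha> S y - cphi \<alpha> T x))"

definition tphi :: "('a::euclidean_space \<Rightarrow> real) \<Rightarrow> real \<Rightarrow> real \<Rightarrow> (real \<Rightarrow> 'a) \<Rightarrow> (real \<Rightarrow> 'a) \<Rightarrow> real" where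
  "tphi \<alpha> T S x y = cphi \<alpha> S y + ln (1 + exp (cphi \<alpha> T x - ceps \<alpha> S y))"

definition tact :: "('a::euclidean_space \<Rightarrow> real) \<Rightarrow> 'a \<Rightarrow> real \<Rightarrow> real \<Rightarrow> real \<Rightarrow> (real \<Rightarrow> 'a) \<Rightarrow> (real \<Rightarrow> 'a)
      \<Rightarrow> (real \<Rightarrow> 'a) \<times> (real \<Rightarrow> 'a)" where
  "tact \<alpha> av T S c x y =
     (let c1 = ln ((exp (c + cphi \<alpha> T x) + exp (ceps \<alpha> S y)) / (exp (cphi \<alpha> T x) + exp (ceps \<alpha> S y)));
          c2 = ln ((exp (cphi \<alpha> T x) + exp (ceps \<alpha> S y)) / (exp (cphi \<alpha> T x) + exp (- c + ceps \<alpha> S y)))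
      in (cact \<alpha> av T c1 x, cact \<alpha> av S c2 y))"

definition pconcat :: "real \<Rightarrow> real \<Rightarrow> (real \<Rightarrow> 'a::euclidean_space) \<Rightarrow> (real \<Rightarrow> 'a) \<Rightarrow> (real \<Rightarrow> 'a)" where
  "pconcat T S p1 p2 = (\<lambda>t\<in>{0..T+S}. if t \<le> T then p1 t else p1 T + p2 (t - T))"

end

theory Submission imports Defs begin

lemma cont_expa:
  assumes "continuous_on A p" "linear (\<alpha>::'a::euclidean_space \<Rightarrow> real)"
  shows "continuous_on A (\<lambda>s. exp (- \<alpha> (p s)))"
proof -
  have "continuous_on UNIV \<alpha>" using assms(2) by (simp add: linear_continuous_on linear_conv_bounded_linear)
  then have "continuous_on A (\<alpha> \<circ> p)" using assms(1) continuous_on_compose continuous_on_subset by blast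
  then show ?thesis by (auto intro!: continuous_intros simp: o_def)
qed

lemma intpos:
  fixes g :: "real \<Rightarrow> real"
  assumes "T > 0" "continuous_on {0..T} g" "\<And>x. g x > 0"
  shows "integral {0..T} g > 0"
proof -
  obtain x where x: "x \<in> {0..T}" "\<forall>y\<in>{0..T}. g x \<le> g y"
    using continuous_attains_inf[of "{0..T}" g] assms by auto
  have "integral {0..T} (\<lambda>_. g x) \<le> integral {0..T} g"
    by (rule integral_le) (use x assms in \<open>auto intro: integrable_continuous_interval\<close>)
  moreover have "integral {0..T} (\<lambda>_. g x) = T * g x" using assms by simp
  moreover have "T * g x > 0" using assms by simp
  ultimately show ?thesis by linarith
qed

lemma intmono:
  fixes g :: "real \<Rightarrow> real"
  assumes "0 \<le> t" "t \<le> T" "continuous_on {0..T} g" "\<And>x. g x \<ge> 0"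
  shows "0 \<le> integral {0..t} g \<and> integral {0..t} g \<le> integral {0..T} g"
proof
  have ct: "continuous_on {0..t} g" using assms continuous_on_subset by fastforce
  show "0 \<le> integral {0..t} g" by (rule integral_nonneg) (use ct assms in \<open>auto intro: integrable_continuous_interval\<close>)
  show "integral {0..t} g \<le> integral {0..T} g"
    by (rule integral_subset_le) (use ct assms in \<open>auto intro: integrable_continuous_interval\<close>)
qed


lemma pconcat_cont:
  assumes "T > 0" "S > 0" "p1 \<in> C0 T" "p2 \<in> C0 S"
  shows "continuous_on {0..T+S} (pconcat T S p1 p2)"
proof -
  have c1: "continuous_on {0..T} p1" and c2: "continuous_on {0..S} p2" and z: "p2 0 = 0"
    using assms by (auto simp: C0_def)
  have "continuous_on {T..T+S} (p2 \<circ> (\<lambda>t. t - T))"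
    by (rule continuous_on_compose) (auto intro!: continuous_intros continuous_on_subset[OF c2])
  then have c2': "continuous_on {T..T+S} (\<lambda>t. p1 T + p2 (t - T))"
    by (auto intro!: continuous_intros simp: o_def)
  have "continuous_on {0..T+S} (\<lambda>t. if id t \<le> T then p1 t else p1 T + p2 (t - T))"
    apply (rule continuous_on_cases_le)
    subgoal by (rule continuous_on_subset[OF c1]) auto
    subgoal by (rule continuous_on_subset[OF c2']) auto
    subgoal by (simp add: continuous_on_id)
    subgoal using z by simp
    done
  then show ?thesis
    by (rule continuous_on_eq) (auto simp: pconcat_def)
qed

lemma pconcat_C0:
  assumes "T > 0" "S > 0" "p1 \<in> C0 T" "p2 \<in> C0 S"
  shows "pconcat T S p1 p2 \<in> C0 (T+S)"
  using pconcat_cont[OF assms] assms by (auto simp: C0_def pconcat_def)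

lemma pconcat_bij:
  assumes "T > 0" "S > 0"
  shows "bij_betw (\<lambda>(p1 :: real \<Rightarrow> 'a::euclidean_space, p2). pconcat T S p1 p2) (C0 T \<times> C0 S) (C0 (T + S))"
  unfolding bij_betw_def
proof safe
  show "inj_on (\<lambda>(p1 :: real \<Rightarrow> 'a, p2). pconcat T S p1 p2) (C0 T \<times> C0 S)"
  proof (rule inj_onI, clarsimp)
    fix p1 p2 q1 q2 :: "real \<Rightarrow> 'a"
    assume m: "p1 \<in> C0 T" "p2 \<in> C0 S" "q1 \<in> C0 T" "q2 \<in> C0 S"
      and e: "pconcat T S p1 p2 = pconcat T S q1 q2"
    have h1: "p1 t = q1 t" if "t \<in> {0..T}" for t
      using fun_cong[OF e, of t] that assms by (auto simp: pconcat_def)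
    have p1q1: "p1 = q1"
      using m h1 by (intro extensionalityI[of _ "{0..T}"]) (auto simp: C0_def)
    have h2: "p2 u = q2 u" if "u \<in> {0..S}" for u
    proof (cases "u = 0")
      case True then show ?thesis using m by (simp add: C0_def)
    next
      case False
      then show ?thesis using fun_cong[OF e, of "T + u"] that assms p1q1 by (auto simp: pconcat_def)
    qed
    have "p2 = q2"
      using m h2 by (intro extensionalityI[of _ "{0..S}"]) (auto simp: C0_def)
    with p1q1 show "p1 = q1 \<and> p2 = q2" by simp
  qed
next
  fix p1 p2 :: "real \<Rightarrow> 'a" assume "p1 \<in> C0 T" "p2 \<in> C0 S"
  then show "pconcat T S p1 p2 \<in> C0 (T + S)" using pconcat_C0 assms by blast
next
  fix q :: "real \<Rightarrow> 'a" assume q: "q \<in> C0 (T + S)"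
  define p1 where "p1 = restrict q {0..T}"
  define p2 where "p2 = restrict (\<lambda>u. q (T + u) - q T) {0..S}"
  have cq: "continuous_on {0..T+S} q" using q by (simp add: C0_def)
  have "p1 \<in> C0 T"
    unfolding p1_def C0_def using q assms
    by (auto simp: C0_def intro!: continuous_on_subset[OF cq] continuous_on_eq[where f=q])
  moreover have "continuous_on {0..S} (\<lambda>u. q (T + u) - q T)"
  proof -
    have "continuous_on {0..S} (q \<circ> (\<lambda>u. T + u))"
      by (rule continuous_on_compose) (use assms in \<open>auto intro!: continuous_intros continuous_on_subset[OF cq]\<close>)
    then show ?thesis by (auto intro!: continuous_intros simp: o_def)
  qed
  then have "p2 \<in> C0 S"
    unfolding p2_def C0_def using assms
    by (auto intro: continuous_on_eq)
  moreover have "q = pconcat T S p1 p2"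
    using q assms unfolding p1_def p2_def pconcat_def C0_def
    by (auto simp: extensional_def fun_eq_iff)
  ultimately show "q \<in> (\<lambda>(p1, p2). pconcat T S p1 p2) ` (C0 T \<times> C0 S)" by auto
qed


lemma int_split1:
  assumes "t \<in> {0..T}" "S > 0"
  shows "integral {0..t} (\<lambda>s. exp (- \<alpha> (pconcat T S p1 p2 s))) = integral {0..t} (\<lambda>s. exp (- \<alpha> (p1 s)))"
  by (rule integral_cong) (use assms in \<open>auto simp: pconcat_def\<close>)

lemma int_split2:
  fixes \<alpha> :: "'a::euclidean_space \<Rightarrow> real"
  assumes "T > 0" "S > 0" "p1 \<in> C0 T" "p2 \<in> C0 S" "linear \<alpha>" "T \<le> t" "t \<le> T + S"
  shows "integral {0..t} (\<lambda>s. exp (- \<alpha> (pconcat T S p1 p2 s))) =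
     integral {0..T} (\<lambda>s. exp (- \<alpha> (p1 s))) + exp (- \<alpha> (p1 T)) * integral {0..t-T} (\<lambda>s. exp (- \<alpha> (p2 s)))"
proof -
  define F where "F = (\<lambda>s. exp (- \<alpha> (pconcat T S p1 p2 s)))"
  have cF: "continuous_on {0..T+S} F"
    unfolding F_def by (rule cont_expa[OF pconcat_cont[OF assms(1-4)] assms(5)])
  have iF: "F integrable_on {0..t}"
    by (rule integrable_continuous_interval, rule continuous_on_subset[OF cF]) (use assms in auto)
  have "integral {0..T} F + integral {T..t} F = integral {0..t} F"
    by (rule Henstock_Kurzweil_Integration.integral_combine) (use assms iF in auto)
  moreover have "integral {0..T} F = integral {0..T} (\<lambda>s. exp (- \<alpha> (p1 s)))"
    unfolding F_def by (rule int_split1) (use assms in auto)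
  moreover have "integral {T..t} F = integral {0..t-T} (F \<circ> (+) T)"
    using integral_shift_Icc_real[of 0 "t-T" F T] by (simp add: add.commute)
  moreover have "integral {0..t-T} (F \<circ> (+) T) = integral {0..t-T} (\<lambda>s. exp (- \<alpha> (p1 T)) * exp (- \<alpha> (p2 s)))"
  proof (rule integral_cong)
    fix u assume u: "u \<in> {0..t-T}"
    have z: "p2 0 = 0" using assms by (simp add: C0_def)
    have "pconcat T S p1 p2 (T + u) = p1 T + p2 u"
      using u assms z by (auto simp: pconcat_def)
    then show "(F \<circ> (+) T) u = exp (- \<alpha> (p1 T)) * exp (- \<alpha> (p2 u))"
      using assms(5) by (simp add: F_def linear_add exp_add[symmetric])
  qed
  ultimately show ?thesis by (simp add: F_def)
qed

lemma alg1: fixes I1 I2 a :: real assumes "I1 > 0" "I2 > 0"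
  shows "ln (I1 + exp (-a) * I2) = ln I1 + ln (1 + exp (ln I2 - (a + ln I1)))"
proof -
  have "exp (ln I2 - (a + ln I1)) = I2 * exp (-a) / I1"
    using assms by (simp add: exp_diff exp_add exp_minus field_simps)
  moreover have "I1 + exp (-a) * I2 = I1 * (1 + I2 * exp (-a) / I1)" using assms by (simp add: field_simps)
  moreover have "1 + I2 * exp (-a) / I1 > 0" using assms by (simp add: add_pos_nonneg)
  ultimately show ?thesis using assms by (simp add: ln_mult)
qed

lemma alg2: fixes I1 I2 a b :: real assumes "I1 > 0" "I2 > 0"
  shows "a + b + ln (I1 + exp (-a) * I2) = b + ln I2 + ln (1 + exp (a + ln I1 - ln I2))"
proof -
  have "exp (a + ln I1 - ln I2) = exp a * I1 / I2"
    using assms by (simp add: exp_diff exp_add)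
  moreover have "1 + exp a * I1 / I2 > 0" using assms by (simp add: add_pos_nonneg)
  moreover have "I1 + exp (-a) * I2 = exp (-a) * (I2 * (1 + exp a * I1 / I2))"
    using assms by (simp add: field_simps exp_minus)
  ultimately show ?thesis using assms by (simp add: ln_mult)
qed

lemma alg3: fixes I1 I2 a c J :: real assumes "I1 > 0" "I2 > 0"
  shows "ln (1 + (exp (ln ((exp (c + (a + ln I1)) + exp (ln I2)) / (exp (a + ln I1) + exp (ln I2)))) - 1) * exp (- ln I1) * J)
       = ln (1 + (exp c - 1) * exp (- ln (I1 + exp (-a) * I2)) * J)"
proof -
  define A where "A = exp a * I1"
  define e where "e = exp c"
  have A: "A > 0" "e > 0" using assms by (auto simp: A_def e_def)
  have e1: "exp (c + (a + ln I1)) = e * A" "exp (a + ln I1) = A"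
    using assms by (simp_all add: A_def e_def exp_add)
  have p1: "(e * A + I2) / (A + I2) > 0" using A assms by (simp add: add_pos_pos)
  have q: "I1 + exp (-a) * I2 > 0" using assms by (simp add: add_pos_nonneg)
  have eA: "exp (-a) = I1 / A" "inverse (exp a) = I1 / A" using assms by (simp_all add: A_def exp_minus field_simps)
  have "((e * A + I2) / (A + I2) - 1) / I1 = (e - 1) / (I1 + I1 / A * I2)"
    using A assms by (simp add: field_simps)
  then have "(exp (ln ((exp (c + (a + ln I1)) + exp (ln I2)) / (exp (a + ln I1) + exp (ln I2)))) - 1) * exp (- ln I1)
        = (exp c - 1) * exp (- ln (I1 + exp (-a) * I2))"
    using assms p1 q by (simp add: e1 exp_minus eA e_def[symmetric] divide_inverse)
  then show ?thesis by simp
qed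

lemma alg4: fixes I1 I2 a c J :: real assumes "I1 > 0" "I2 > 0" "0 \<le> J" "J \<le> I2"
  shows "ln (1 + (exp (ln ((exp (c + (a + ln I1)) + exp (ln I2)) / (exp (a + ln I1) + exp (ln I2)))) - 1) * exp (- ln I1) * I1)
     + ln (1 + (exp (ln ((exp (a + ln I1) + exp (ln I2)) / (exp (a + ln I1) + exp (- c + ln I2)))) - 1) * exp (- ln I2) * J)
       = ln (1 + (exp c - 1) * exp (- ln (I1 + exp (-a) * I2)) * (I1 + exp (-a) * J))"
proof -
  define A where "A = exp a * I1"
  define e where "e = exp c"
  have A: "A > 0" "e > 0" using assms by (auto simp: A_def e_def)
  have e0: "exp (- c + ln I2) = exp (- c) * exp (ln I2)" by (rule exp_add)
  have e1: "exp (c + (a + ln I1)) = e * A" "exp (a + ln I1) = A" "exp (- c + ln I2) = I2 / e"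
    using assms e0 by (simp_all add: A_def e_def exp_add exp_minus field_simps)
  have p1: "(e * A + I2) / (A + I2) > 0" using A assms by (simp add: add_pos_pos)
  have p2: "(A + I2) / (A + I2 / e) > 0" using A assms by (simp add: add_pos_pos)
  have q: "I1 + exp (-a) * I2 > 0" using assms by (simp add: add_pos_nonneg)
  have eA: "exp (-a) = I1 / A" "inverse (exp a) = I1 / A" using assms by (simp_all add: A_def exp_minus field_simps)
  define x where "x = 1 + ((A + I2) / (A + I2 / e) - 1) / I2 * J"
  have d: "I2 + A * e \<noteq> 0" "A * e + I2 \<noteq> 0" "I2 + e * A \<noteq> 0" "e * A + I2 \<noteq> 0" "A + I2 / e \<noteq> 0" "A * e \<noteq> - I2" "e * A \<noteq> - I2"
    using A assms by (smt (verit) mult_pos_pos divide_pos_pos mult.commute)+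
  have "(A + I2) / (A + I2 / e) = e * (A + I2) / (e * A + I2)" using A d by (simp add: field_simps)
  moreover have "e * (A + I2) / (e * A + I2) - 1 = (e - 1) * I2 / (e * A + I2)"
    using d by (simp add: field_simps)
  ultimately have x2: "x = 1 + (e - 1) * J / (e * A + I2)"
    unfolding x_def using A assms by simp
  have x: "x > 0"
  proof -
    have "x = (e * A + (I2 - J) + e * J) / (e * A + I2)"
      unfolding x2 using A assms d by (simp add: field_simps)
    moreover have "e * A + (I2 - J) + e * J > 0" using A assms
      by (smt (verit) mult_nonneg_nonneg mult_pos_pos)
    ultimately show ?thesis using A assms by (simp add: add_pos_pos)
  qed
  have L: "ln (1 + (exp (ln ((exp (c + (a + ln I1)) + exp (ln I2)) / (exp (a + ln I1) + exp (ln I2)))) - 1) * exp (- ln I1) * I1)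
     = ln ((e * A + I2) / (A + I2))"
    using assms p1 by (simp add: e1 exp_minus mult.assoc)
  have M: "ln (1 + (exp (ln ((exp (a + ln I1) + exp (ln I2)) / (exp (a + ln I1) + exp (- c + ln I2)))) - 1) * exp (- ln I2) * J) = ln x"
    unfolding e1 using assms p2 by (simp add: exp_minus x_def divide_inverse mult.assoc mult.commute)
  have R: "1 + (exp c - 1) * exp (- ln (I1 + exp (-a) * I2)) * (I1 + exp (-a) * J) = (e * A + I2) / (A + I2) * x"
  proof -
    have l2: "(exp c - 1) * exp (- ln (I1 + exp (-a) * I2)) * (I1 + exp (-a) * J) = (e - 1) * (A + J) / (A + I2)"
    proof -
      have "I1 + exp (-a) * I2 = I1 * (A + I2) / A" "I1 + exp (-a) * J = I1 * (A + J) / A"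
        using A assms by (simp_all add: eA field_simps)
      moreover have "I1 * (A + I2) / A > 0" using A assms by simp
      moreover have "exp (- ln y) = 1 / y" if "y > 0" for y :: real using that by (simp add: exp_minus inverse_eq_divide)
      ultimately have "(exp c - 1) * exp (- ln (I1 + exp (-a) * I2)) * (I1 + exp (-a) * J)
          = (e - 1) * (1 / (I1 * (A + I2) / A)) * (I1 * (A + J) / A)"
        by (simp add: e_def)
      also have "\<dots> = (e - 1) * (A + J) / (A + I2)"
      proof -
        have "A + I2 \<noteq> 0" "A \<noteq> 0" "I1 \<noteq> 0" using A assms by auto
        moreover have "\<And>B C. I1 \<noteq> 0 \<Longrightarrow> A \<noteq> 0 \<Longrightarrow> B \<noteq> 0 \<Longrightarrow> (1 / (I1 * B / A)) * (I1 * C / A) = C / B"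
          by (simp add: field_simps)
        ultimately have "(1 / (I1 * (A + I2) / A)) * (I1 * (A + J) / A) = (A + J) / (A + I2)"
          by blast
        then show ?thesis by (metis mult.assoc times_divide_eq_right)
      qed
      finally show ?thesis .
    qed
    have g1: "\<And>P. P \<noteq> 0 \<Longrightarrow> 1 + (e - 1) * (A + J) / P = (P + (e - 1) * (A + J)) / P"
      by (simp add: field_simps)
    have g2: "\<And>P Q. P \<noteq> 0 \<Longrightarrow> Q \<noteq> 0 \<Longrightarrow> Q / P * (1 + (e - 1) * J / Q) = (Q + (e - 1) * J) / P"
      by (simp add: field_simps)
    have "A + I2 \<noteq> 0" using A assms by auto
    moreover have "A + I2 + (e - 1) * (A + J) = e * A + I2 + (e - 1) * J" by (simp add: algebra_simps)
    ultimately show ?thesis unfolding l2 x2 g1[OF \<open>A + I2 \<noteq> 0\<close>] g2[OF \<open>A + I2 \<noteq> 0\<close> d(4)] by simp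
  qed
  have "ln ((e * A + I2) / (A + I2) * x) = ln ((e * A + I2) / (A + I2)) + ln x"
    using p1 x by (rule ln_mult_pos)
  then show ?thesis unfolding L M R by simp
qed

theorem mainTheorem3:
  fixes T S :: real and \<alpha> :: "'a::euclidean_space \<Rightarrow> real" and av :: 'a
  assumes "T > 0" and "S > 0"
    and "linear \<alpha>" and "\<alpha> av = 2"
  shows "bij_betw (\<lambda>(p1 :: real \<Rightarrow> 'a, p2). pconcat T S p1 p2) (C0 T \<times> C0 S) (C0 (T + S))
    \<and> (\<forall>p1\<in>C0 T. \<forall>p2\<in>C0 S.
         cgamma (T + S) (pconcat T S p1 p2) = tgamma T S p1 p2
       \<and> ceps \<alpha> (T + S) (pconcat T S p1 p2) = teps \<alpha> T S p1 p2
       \<and> cphi \<alpha> (T + S) (pconcat T S p1 p2) = tphi \<alpha> T S p1 p2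
       \<and> (\<forall>c::real. cact \<alpha> av (T + S) c (pconcat T S p1 p2)
              = (\<lambda>(q1, q2). pconcat T S q1 q2) (tact \<alpha> av T S c p1 p2)))"
proof (intro conjI ballI allI)
  show "bij_betw (\<lambda>(p1 :: real \<Rightarrow> 'a, p2). pconcat T S p1 p2) (C0 T \<times> C0 S) (C0 (T + S))"
    using pconcat_bij assms by blast
  fix p1 p2 :: "real \<Rightarrow> 'a" assume p1: "p1 \<in> C0 T" and p2: "p2 \<in> C0 S"
  define \<pi> where "\<pi> = pconcat T S p1 p2"
  define I1 where "I1 = integral {0..T} (\<lambda>s. exp (- \<alpha> (p1 s)))"
  define I2 where "I2 = integral {0..S} (\<lambda>s. exp (- \<alpha> (p2 s)))"
  define a where "a = \<alpha> (p1 T)"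
  have c1: "continuous_on {0..T} (\<lambda>s. exp (- \<alpha> (p1 s)))"
    using p1 assms by (intro cont_expa) (auto simp: C0_def)
  have c2: "continuous_on {0..S} (\<lambda>s. exp (- \<alpha> (p2 s)))"
    using p2 assms by (intro cont_expa) (auto simp: C0_def)
  have I1: "I1 > 0" unfolding I1_def using c1 assms by (intro intpos) auto
  have I2: "I2 > 0" unfolding I2_def using c2 assms by (intro intpos) auto
  have I: "integral {0..T+S} (\<lambda>s. exp (- \<alpha> (\<pi> s))) = I1 + exp (- a) * I2"
    unfolding \<pi>_def I1_def I2_def a_def using int_split2[OF assms(1,2) p1 p2 assms(3), of "T+S"] assms by simp
  have epsT: "ceps \<alpha> (T+S) \<pi> = ln (I1 + exp (- a) * I2)" using I by (simp add: ceps_def)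
  have eps1: "ceps \<alpha> T p1 = ln I1" by (simp add: ceps_def I1_def)
  have eps2: "ceps \<alpha> S p2 = ln I2" by (simp add: ceps_def I2_def)
  have phi1: "cphi \<alpha> T p1 = a + ln I1" by (simp add: cphi_def eps1 a_def)
  have z2: "p2 0 = 0" using p2 by (simp add: C0_def)
  have piT: "\<pi> (T + S) = p1 T + p2 S" using assms by (simp add: \<pi>_def pconcat_def)
  show "cgamma (T + S) (pconcat T S p1 p2) = tgamma T S p1 p2"
    using piT by (simp add: \<pi>_def cgamma_def tgamma_def)
  show "ceps \<alpha> (T + S) (pconcat T S p1 p2) = teps \<alpha> T S p1 p2"
    unfolding \<pi>_def[symmetric] teps_def epsT eps1 eps2 phi1 using alg1[OF I1 I2] by simp
  show "cphi \<alpha> (T + S) (pconcat T S p1 p2) = tphi \<alpha> T S p1 p2"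
    unfolding \<pi>_def[symmetric] tphi_def cphi_def[of _ "T+S"] epsT phi1 eps2 piT
    using alg2[OF I1 I2, of a "\<alpha> (p2 S)"] assms(3) by (simp add: linear_add a_def cphi_def eps2)
  fix c :: real
  define c1 where "c1 = ln ((exp (c + (a + ln I1)) + exp (ln I2)) / (exp (a + ln I1) + exp (ln I2)))"
  define c2 where "c2 = ln ((exp (a + ln I1) + exp (ln I2)) / (exp (a + ln I1) + exp (- c + ln I2)))"
  have tact: "tact \<alpha> av T S c p1 p2 = (cact \<alpha> av T c1 p1, cact \<alpha> av S c2 p2)"
    by (simp add: tact_def Let_def phi1 eps2 c1_def c2_def)
  show "cact \<alpha> av (T + S) c (pconcat T S p1 p2) = (\<lambda>(q1, q2). pconcat T S q1 q2) (tact \<alpha> av T S c p1 p2)"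
    unfolding \<pi>_def[symmetric] tact prod.case
  proof (rule ext)
    fix t
    show "cact \<alpha> av (T + S) c \<pi> t = pconcat T S (cact \<alpha> av T c1 p1) (cact \<alpha> av S c2 p2) t"
    proof (cases "t \<in> {0..T+S}")
      case False then show ?thesis using assms by (auto simp: cact_def pconcat_def)
    next
      case True
      show ?thesis
      proof (cases "t \<le> T")
        case True
        have "integral {0..t} (\<lambda>s. exp (- \<alpha> (\<pi> s))) = integral {0..t} (\<lambda>s. exp (- \<alpha> (p1 s)))"
          unfolding \<pi>_def using True \<open>t \<in> {0..T+S}\<close> assms by (intro int_split1) auto
        moreover have "\<pi> t = p1 t" using True \<open>t \<in> {0..T+S}\<close> by (simp add: \<pi>_def pconcat_def)
        ultimately show ?thesis using True \<open>t \<in> {0..T+S}\<close>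
          by (simp add: cact_def pconcat_def epsT eps1 c1_def alg3[OF I1 I2])
      next
        case False
        define J where "J = integral {0..t-T} (\<lambda>s. exp (- \<alpha> (p2 s)))"
        have J: "0 \<le> J" "J \<le> I2" unfolding J_def I2_def
          using intmono[of "t-T" S, OF _ _ c2] False \<open>t \<in> {0..T+S}\<close> by auto
        have int: "integral {0..t} (\<lambda>s. exp (- \<alpha> (\<pi> s))) = I1 + exp (- a) * J"
          unfolding \<pi>_def I1_def J_def a_def
          using int_split2[OF assms(1,2) p1 p2 assms(3), of t] False \<open>t \<in> {0..T+S}\<close> by simp
        have pt: "\<pi> t = p1 T + p2 (t - T)" using False \<open>t \<in> {0..T+S}\<close> by (simp add: \<pi>_def pconcat_def)
        have "cact \<alpha> av (T + S) c \<pi> t = p1 T + p2 (t - T) +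
            ln (1 + (exp c - 1) * exp (- ln (I1 + exp (-a) * I2)) * (I1 + exp (-a) * J)) *\<^sub>R av"
          using \<open>t \<in> {0..T+S}\<close> by (simp add: cact_def pt epsT int)
        also have "\<dots> = (p1 T + ln (1 + (exp c1 - 1) * exp (- ln I1) * I1) *\<^sub>R av)
             + (p2 (t - T) + ln (1 + (exp c2 - 1) * exp (- ln I2) * J) *\<^sub>R av)"
          unfolding alg4[OF I1 I2 J, of c a, folded c1_def c2_def, symmetric]
          by (simp add: scaleR_add_left algebra_simps)
        also have "\<dots> = pconcat T S (cact \<alpha> av T c1 p1) (cact \<alpha> av S c2 p2) t"
          using False \<open>t \<in> {0..T+S}\<close> assms
          by (simp add: pconcat_def cact_def eps1 eps2 I1_def[symmetric] J_def)
        finally show ?thesis .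
      qed
    qed
  qed
qed

end
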